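(* Let $n\ge3$, let $t_1,\dots,t_m\in\mathcal{T}_n$ and let $w_1,\dots,w_m$ be positive real weights, and let $c$ be the weighted asymmetric tropical consensus tree of $(t_1,w_1),\dots,(t_m,w_m)$. Then for all distinct leaves $i,j,k\in[n]$: (Pareto) if every $t_l$ contains the rooted triple $ij|k$, then $c$ contains $ij|k$; (co-Pareto) if $c$ contains $ij|k$, then at least one $t_l$ contains $ij|k$.
   Context: $N=\binom n2$, coordinates of $\mathbb{R}^N$ indexed by pairs $\{i,j\}\subset[n]$. An ultrametric is $\delta\in\mathbb{R}^N$ such that for all distinct $i,j,k$ the maximum of $\delta(i,j),\delta(i,k),\delta(j,k)$ is attained at least twice; ultrametrics are exactly the leaf-to-leaf distance vectors of equidistant rooted phylogenetic trees. $\mathcal{T}_n=\{-\delta:\delta\text{ ultrametric}\}$, viewed in $\mathbb{R}^N/\mathbb{R}\mathbf{1}_N$ and identified with $H_N=\{x\in\mathbb{R}^N:\sum x=0\}$. For $x,y\in H_N$, $d_\Delta(x,y)=N\max_p(x_p-y_p)$; the weighted Fermat–Weber set is $\mathrm{FW}(T,w)=\operatorname{argmin}_{x\in H_N}\sum_l w_l d_\Delta(x,t_l)$, a bounded polytope. The weighted asymmetric tropical consensus tree is the classical average of the vertices of $\mathrm{FW}(T,w)$ (a point of $\mathcal{T}_n$). A point $x\in\mathcal{T}_n$, with $\delta=-x$ (any representative), contains the rooted triple $ij|k$ if $\delta(i,j)<\delta(i,k)=\delta(j,k)$. *)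

theory Defs
  imports Main "HOL-Library.Lattice_Algebras" Complex_Main
begin

text \<open>Leaves are 0,...,n-1. Coordinates of R^N (N = n choose 2) are indexed by the
  2-element subsets of the leaf set. A point of R^N is a function on index sets that
  vanishes outside these pairs.\<close>

definition pairs :: "nat \<Rightarrow> nat set set" where
  "pairs n = {p. p \<subseteq> {..<n} \<and> card p = 2}"

definition HN :: "nat \<Rightarrow> (nat set \<Rightarrow> real) set" where
  "HN n = {x. (\<forall>p. p \<notin> pairs n \<longrightarrow> x p = 0) \<and> (\<Sum>p\<in>pairs n. x p) = 0}"

definition ultrametric :: "nat \<Rightarrow> (nat set \<Rightarrow> real) \<Rightarrow> bool" where
  "ultrametric n \<delta> \<longleftrightarrow>
    (\<forall>i<n. \<forall>j<n. \<forall>k<n. i \<noteq> j \<and> i \<noteq> k \<and> j \<noteq> k \<longrightarrow>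
       (let a = \<delta> {i,j}; b = \<delta> {i,k}; c = \<delta> {j,k} in
         (a = b \<and> c \<le> a) \<or> (a = c \<and> b \<le> a) \<or> (b = c \<and> a \<le> b)))"

text \<open>T_n as a subset of R^N / R1, identified with H_N: points x of H_N such that x is
  congruent modulo R1 to -delta for an ultrametric delta.\<close>
definition tree_space :: "nat \<Rightarrow> (nat set \<Rightarrow> real) set" where
  "tree_space n = {x \<in> HN n. \<exists>\<delta> c. ultrametric n \<delta> \<and> (\<forall>p\<in>pairs n. x p = - \<delta> p + c)}"

definition d_trop :: "nat \<Rightarrow> (nat set \<Rightarrow> real) \<Rightarrow> (nat set \<Rightarrow> real) \<Rightarrow> real" where
  "d_trop n x y = real (n choose 2) * (MAX p\<in>pairs n. x p - y p)"

definition FW_set :: "nat \<Rightarrow> nat \<Rightarrow> (nat \<Rightarrow> nat set \<Rightarrow> real) \<Rightarrow> (nat \<Rightarrow> real) \<Rightarrow> (nat set \<Rightarrow> real) set" where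
  "FW_set n m t w = {x \<in> HN n. \<forall>y\<in>HN n.
      (\<Sum>l<m. w l * d_trop n x (t l)) \<le> (\<Sum>l<m. w l * d_trop n y (t l))}"

definition vertices :: "(nat set \<Rightarrow> real) set \<Rightarrow> (nat set \<Rightarrow> real) set" where
  "vertices S = {v \<in> S. \<not> (\<exists>a\<in>S. \<exists>b\<in>S. \<exists>u::real. a \<noteq> b \<and> 0 < u \<and> u < 1 \<and>
       v = (\<lambda>p. (1 - u) * a p + u * b p))}"

definition consensus :: "nat \<Rightarrow> nat \<Rightarrow> (nat \<Rightarrow> nat set \<Rightarrow> real) \<Rightarrow> (nat \<Rightarrow> real) \<Rightarrow> (nat set \<Rightarrow> real)" where
  "consensus n m t w =
     (let V = vertices (FW_set n m t w) in (\<lambda>p. (\<Sum>v\<in>V. v p) / real (card V)))"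

definition has_triple :: "(nat set \<Rightarrow> real) \<Rightarrow> nat \<Rightarrow> nat \<Rightarrow> nat \<Rightarrow> bool" where
  "has_triple x i j k \<longleftrightarrow> - x {i,j} < - x {i,k} \<and> - x {i,k} = - x {j,k}"

end

theory Submission
  imports Defs "HOL-Analysis.Analysis"
begin


lemma pairs_finite: "finite (pairs n)"
proof -
  have "pairs n \<subseteq> Pow {..<n}" by (auto simp: pairs_def)
  then show ?thesis by (rule finite_subset) simp
qed

lemma pair_in: "i < n \<Longrightarrow> j < n \<Longrightarrow> i \<noteq> j \<Longrightarrow> {i,j} \<in> pairs n"
  by (auto simp: pairs_def)

lemma pairs_ne: "n \<ge> 3 \<Longrightarrow> pairs n \<noteq> {}"
  using pair_in[of 0 n 1] by auto

lemma max_le: "finite A \<Longrightarrow> A \<noteq> {} \<Longrightarrow> (\<And>p. p \<in> A \<Longrightarrow> f p \<le> (c::real)) \<Longrightarrow> (MAX p\<in>A. f p) \<le> c"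
  by (simp add: Max_le_iff)

lemma ge_max: "finite A \<Longrightarrow> p \<in> A \<Longrightarrow> (f p::real) \<le> (MAX p\<in>A. f p)"
  by (simp add: Max_ge)

lemma max_in: "finite A \<Longrightarrow> A \<noteq> {} \<Longrightarrow> \<exists>p\<in>A. (MAX p\<in>A. f p) = (f p::real)"
proof -
  assume "finite A" "A \<noteq> {}"
  then have "Max (f ` A) \<in> f ` A" by (intro Max_in) auto
  then show ?thesis by auto
qed

lemma perturb:
  assumes n: "n \<ge> 3" and m: "m \<ge> 1" and w: "\<And>l. l < m \<Longrightarrow> w l > 0"
    and x: "x \<in> FW_set n m t w" and q: "q \<in> pairs n" and r: "r \<in> pairs n"
    and lt: "\<And>l. l < m \<Longrightarrow> x q - t l q < x r - t l r"
  shows False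
proof -
  define P where "P = pairs n"
  have fin: "finite P" and ne: "P \<noteq> {}" using pairs_finite pairs_ne[OF n] by (auto simp: P_def)
  define K where "K = real (card P)"
  have K: "K > 0" using fin ne by (simp add: K_def card_gt_0_iff)
  define N where "N = real (n choose 2)"
  have N: "N > 0" using n by (simp add: N_def)
  define eps where "eps = Min ((\<lambda>l. (x r - t l r) - (x q - t l q)) ` {..<m})"
  have eps_le: "eps \<le> (x r - t l r) - (x q - t l q)" if "l < m" for l
    unfolding eps_def using that by (intro Min_le) auto
  have eps_pos: "eps > 0"
    unfolding eps_def using m lt by (subst Min_gr_iff) (auto simp: lessThan_empty_iff)
  define y where "y = (\<lambda>p. if p \<in> P then x p + (if p = q then eps else 0) - eps / K else 0)"
  have xH: "x \<in> HN n" using x by (simp add: FW_set_def)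
  have yH: "y \<in> HN n"
  proof -
    have "(\<Sum>p\<in>P. y p) = (\<Sum>p\<in>P. x p) + (\<Sum>p\<in>P. (if p = q then eps else 0)) - (\<Sum>p\<in>P. eps / K)"
      by (simp add: y_def sum.distrib sum_subtractf)
    also have "\<dots> = 0"
      using xH q fin K ne by (simp add: HN_def P_def K_def)
    finally show ?thesis by (simp add: HN_def y_def P_def)
  qed
  have dy: "d_trop n y (t l) = d_trop n x (t l) - N * (eps / K)" if l: "l < m" for l
  proof -
    define M where "M = (MAX p\<in>P. x p - t l p)"
    have "(MAX p\<in>P. y p - t l p) = M - eps / K"
    proof (rule antisym)
      show "(MAX p\<in>P. y p - t l p) \<le> M - eps / K"
      proof (rule max_le[OF fin ne])
        fix p assume p: "p \<in> P"
        show "y p - t l p \<le> M - eps / K"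
        proof (cases "p = q")
          case True
          have "x r - t l r \<le> M" unfolding M_def using r fin by (intro ge_max) (auto simp: P_def)
          then show ?thesis using True p eps_le[OF l] by (simp add: y_def)
        next
          case False
          have "x p - t l p \<le> M" unfolding M_def using p fin by (intro ge_max) auto
          then show ?thesis using False p by (simp add: y_def)
        qed
      qed
    next
      obtain p where p: "p \<in> P" and pm: "M = x p - t l p" using max_in[OF fin ne] unfolding M_def by blast
      have "M - eps / K \<le> y p - t l p" using p pm eps_pos by (simp add: y_def)
      also have "\<dots> \<le> (MAX p\<in>P. y p - t l p)" using p fin by (intro ge_max) auto
      finally show "M - eps / K \<le> (MAX p\<in>P. y p - t l p)" .
    qed
    then show ?thesis unfolding d_trop_def M_def N_def P_def by (simp add: right_diff_distrib)
  qed
  have "(\<Sum>l<m. w l * d_trop n y (t l)) = (\<Sum>l<m. w l * d_trop n x (t l)) - (\<Sum>l<m. w l) * (N * (eps / K))"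
  proof -
    have "(\<Sum>l<m. w l * d_trop n y (t l)) = (\<Sum>l<m. w l * d_trop n x (t l) - w l * (N * (eps / K)))"
      by (rule sum.cong) (simp_all add: dy right_diff_distrib)
    then show ?thesis by (simp only: sum_subtractf sum_distrib_right)
  qed
  moreover have "(\<Sum>l<m. w l) > 0" using m w by (intro sum_pos) (auto simp: lessThan_empty_iff)
  moreover have "N * (eps / K) > 0" using N eps_pos K by simp
  moreover have "(\<Sum>l<m. w l * d_trop n x (t l)) \<le> (\<Sum>l<m. w l * d_trop n y (t l))"
    using x yH by (simp add: FW_set_def)
  ultimately show False by (smt (verit) mult_pos_pos)
qed

lemma G1:
  assumes n: "n \<ge> 3" and m: "m \<ge> 1" and w: "\<And>l. l < m \<Longrightarrow> w l > 0"
    and x: "x \<in> FW_set n m t w" and a: "a \<in> pairs n" and b: "b \<in> pairs n"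
    and le: "\<And>l. l < m \<Longrightarrow> t l a \<le> t l b"
  shows "x a \<le> x b"
proof (rule ccontr)
  assume "\<not> x a \<le> x b"
  then have "\<And>l. l < m \<Longrightarrow> x b - t l b < x a - t l a" using le by (smt (verit))
  then show False using perturb[where n=n and m=m and w=w and t=t, OF n m w x b a] by blast
qed

lemma G2:
  assumes n: "n \<ge> 3" and m: "m \<ge> 1" and w: "\<And>l. l < m \<Longrightarrow> w l > 0"
    and a: "a \<in> pairs n" and b: "b \<in> pairs n"
    and lt: "\<And>l. l < m \<Longrightarrow> t l b < t l a"
  shows "\<exists>D>0. \<forall>x\<in>FW_set n m t w. x a - x b \<ge> D"
proof -
  define D where "D = Min ((\<lambda>l. t l a - t l b) ` {..<m})"
  have D_le: "D \<le> t l a - t l b" if "l < m" for l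
    unfolding D_def using that by (intro Min_le) auto
  have D_pos: "D > 0"
    unfolding D_def using m lt by (subst Min_gr_iff) (auto simp: lessThan_empty_iff)
  have "x a - x b \<ge> D" if x: "x \<in> FW_set n m t w" for x
  proof (rule ccontr)
    assume "\<not> x a - x b \<ge> D"
    then have "\<And>l. l < m \<Longrightarrow> x a - t l a < x b - t l b" using D_le by (smt (verit))
    then show False using perturb[where n=n and m=m and w=w and t=t, OF n m w x a b] by blast
  qed
  then show ?thesis using D_pos by blast
qed

lemma ultra_le:
  assumes "t \<in> tree_space n" "i < n" "j < n" "k < n" "i \<noteq> j" "i \<noteq> k" "j \<noteq> k"
    and "\<not> has_triple t i j k"
  shows "t {i,j} \<le> t {i,k}"
proof -
  obtain \<delta> c where u: "ultrametric n \<delta>" and e: "\<forall>p\<in>pairs n. t p = - \<delta> p + c"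
    using assms(1) by (auto simp: tree_space_def)
  have "{i,j} \<in> pairs n" "{i,k} \<in> pairs n" "{j,k} \<in> pairs n" using assms(2-7) by (auto intro: pair_in)
  with e have tt: "t {i,j} = - \<delta> {i,j} + c" "t {i,k} = - \<delta> {i,k} + c" "t {j,k} = - \<delta> {j,k} + c" by auto
  have "(\<delta> {i,j} = \<delta> {i,k} \<and> \<delta> {j,k} \<le> \<delta> {i,j}) \<or> (\<delta> {i,j} = \<delta> {j,k} \<and> \<delta> {i,k} \<le> \<delta> {i,j}) \<or>
        (\<delta> {i,k} = \<delta> {j,k} \<and> \<delta> {i,j} \<le> \<delta> {i,k})"
  proof -
    have H: "\<forall>i<n. \<forall>j<n. \<forall>k<n. i \<noteq> j \<and> i \<noteq> k \<and> j \<noteq> k \<longrightarrow>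
       (let a = \<delta> {i,j}; b = \<delta> {i,k}; c = \<delta> {j,k} in
         (a = b \<and> c \<le> a) \<or> (a = c \<and> b \<le> a) \<or> (b = c \<and> a \<le> b))"
      using u by (simp only: ultrametric_def)
    have d: "i \<noteq> j \<and> i \<noteq> k \<and> j \<noteq> k" using assms by simp
    show ?thesis using H[rule_format, OF assms(2,3,4) d] by (simp only: Let_def)
  qed
  then show ?thesis using assms(8) tt unfolding has_triple_def by auto
qed

lemma vertices_sub: "vertices S \<subseteq> S" by (auto simp: vertices_def)

lemma main_from_vertices:
  assumes n: "n \<ge> 3" and m: "m \<ge> 1"
    and tr: "\<And>l. l < m \<Longrightarrow> t l \<in> tree_space n"
    and w: "\<And>l. l < m \<Longrightarrow> w l > 0"
    and fin: "finite (vertices (FW_set n m t w))" and ne: "vertices (FW_set n m t w) \<noteq> {}"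
  shows "\<forall>i<n. \<forall>j<n. \<forall>k<n. i \<noteq> j \<and> i \<noteq> k \<and> j \<noteq> k \<longrightarrow>
           ((\<forall>l<m. has_triple (t l) i j k) \<longrightarrow> has_triple (consensus n m t w) i j k) \<and>
           (has_triple (consensus n m t w) i j k \<longrightarrow> (\<exists>l<m. has_triple (t l) i j k))"
proof (intro allI impI conjI)
  fix i j k assume ijk: "i < n" "j < n" "k < n" "i \<noteq> j \<and> i \<noteq> k \<and> j \<noteq> k"
  define V where "V = vertices (FW_set n m t w)"
  have VF: "V \<subseteq> FW_set n m t w" unfolding V_def by (rule vertices_sub)
  have cV: "real (card V) > 0" using fin ne by (simp add: V_def card_gt_0_iff)
  have c: "consensus n m t w = (\<lambda>p. (\<Sum>v\<in>V. v p) / real (card V))"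
    by (simp add: consensus_def V_def Let_def)
  have ij: "{i,j} \<in> pairs n" and ik: "{i,k} \<in> pairs n" and jk: "{j,k} \<in> pairs n"
    using ijk by (auto intro: pair_in)
  {
    assume all: "\<forall>l<m. has_triple (t l) i j k"
    have tl: "t l {i,k} = t l {j,k}" "t l {i,k} < t l {i,j}" if "l < m" for l
      using all that unfolding has_triple_def by auto
    have le1: "t l {i,k} \<le> t l {j,k}" "t l {j,k} \<le> t l {i,k}" if "l < m" for l
      using tl(1)[OF that] by linarith+
    have eq: "v {i,k} = v {j,k}" if "v \<in> V" for v
    proof -
      have vF: "v \<in> FW_set n m t w" using that VF by blast
      have "v {i,k} \<le> v {j,k}" by (rule G1[where n=n and m=m and w=w and t=t, OF n m w vF ik jk le1(1)])
      moreover have "v {j,k} \<le> v {i,k}" by (rule G1[where n=n and m=m and w=w and t=t, OF n m w vF jk ik le1(2)])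
      ultimately show ?thesis by simp
    qed
    obtain D where D: "D > 0" "\<forall>x\<in>FW_set n m t w. x {i,j} - x {i,k} \<ge> D"
      using G2[where n=n and m=m and w=w and t=t, OF n m w ij ik tl(2)] by blast
    have "(\<Sum>v\<in>V. v {i,k}) = (\<Sum>v\<in>V. v {j,k})" using eq by (rule sum.cong[OF refl])
    then have e2: "consensus n m t w {i,k} = consensus n m t w {j,k}" by (simp add: c)
    have "(\<Sum>v\<in>V. v {i,k} + D) \<le> (\<Sum>v\<in>V. v {i,j})"
    proof (rule sum_mono)
      fix v assume "v \<in> V"
      then have "v \<in> FW_set n m t w" using VF by blast
      then have "D \<le> v {i,j} - v {i,k}" using D(2) by blast
      then show "v {i,k} + D \<le> v {i,j}" by linarith
    qed
    then have "(\<Sum>v\<in>V. v {i,k}) + real (card V) * D \<le> (\<Sum>v\<in>V. v {i,j})"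
      by (simp add: sum.distrib)
    moreover have "real (card V) * D > 0" using cV D by simp
    ultimately have "(\<Sum>v\<in>V. v {i,k}) < (\<Sum>v\<in>V. v {i,j})" by linarith
    then have "consensus n m t w {i,k} < consensus n m t w {i,j}"
      unfolding c using cV by (simp add: divide_strict_right_mono)
    with e2 show "has_triple (consensus n m t w) i j k" unfolding has_triple_def by simp
  }
  {
    assume h: "has_triple (consensus n m t w) i j k"
    show "\<exists>l<m. has_triple (t l) i j k"
    proof (rule ccontr)
      assume "\<not> (\<exists>l<m. has_triple (t l) i j k)"
      then have le: "\<And>l. l < m \<Longrightarrow> t l {i,j} \<le> t l {i,k}"
      proof -
        fix l assume l: "l < m"
        have "\<not> has_triple (t l) i j k" using l \<open>\<not> (\<exists>l<m. has_triple (t l) i j k)\<close> by blast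
        then show "t l {i,j} \<le> t l {i,k}" using ultra_le[OF tr[OF l] ijk(1-3)] ijk(4) by simp
      qed
      have "(\<Sum>v\<in>V. v {i,j}) \<le> (\<Sum>v\<in>V. v {i,k})"
        using G1[where n=n and m=m and w=w and t=t, OF n m w _ ij ik le] VF by (intro sum_mono) auto
      then have "consensus n m t w {i,j} \<le> consensus n m t w {i,k}"
        unfolding c using cV by (simp add: divide_right_mono)
      with h show False unfolding has_triple_def by simp
    qed
  }
qed



lemma FW_eqF:
  assumes "u \<in> FW_set n m t w" "v \<in> FW_set n m t w"
  shows "(\<Sum>l<m. w l * d_trop n u (t l)) = (\<Sum>l<m. w l * d_trop n v (t l))"
  using assms by (auto simp: FW_set_def intro: antisym)

lemma finite_vertices:
  assumes n: "n \<ge> 3" and w: "\<And>l. l < m \<Longrightarrow> w l > 0"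
  shows "finite (vertices (FW_set n m t w))"
proof -
  define P where "P = pairs n"
  have fin: "finite P" and ne: "P \<noteq> {}" using pairs_finite pairs_ne[OF n] by (auto simp: P_def)
  define FW where "FW = FW_set n m t w"
  define V where "V = vertices FW"
  define M where "M = (\<lambda>x l. MAX p\<in>P. x p - t l p)"
  define A where "A = (\<lambda>x l. {p\<in>P. x p - t l p = M x l})"
  define tau where "tau = (\<lambda>x. restrict (A x) {..<m})"
  have Mge: "x p - t l p \<le> M x l" if "p \<in> P" for x p l
    unfolding M_def using fin that by (rule ge_max)
  have inj: "inj_on tau V"
  proof (rule inj_onI, rule ccontr)
    fix u v assume uV: "u \<in> V" and vV: "v \<in> V" and tt: "tau u = tau v" and uv: "u \<noteq> v"
    have AA: "A u l = A v l" if "l < m" for l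
      using fun_cong[OF tt, of l] that by (simp add: tau_def)
    have uF: "u \<in> FW" and vF: "v \<in> FW" using uV vV vertices_sub by (auto simp: V_def)
    have uH: "u \<in> HN n" and vH: "v \<in> HN n" using uF vF by (auto simp: FW_def FW_set_def)
    define gu where "gu = (\<lambda>l p. M u l - (u p - t l p))"
    define gv where "gv = (\<lambda>l p. M v l - (v p - t l p))"
    define S where "S = insert 1 ((\<lambda>(l,p). if gu l p > 0 then gu l p / (\<bar>gv l p\<bar> + 1) else 1) ` ({..<m} \<times> P))"
    define s where "s = Min S"
    have Sfin: "finite S" using fin by (simp add: S_def)
    have s_pos: "s > 0"
      unfolding s_def using Sfin by (subst Min_gr_iff) (auto simp: S_def)
    have key: "(1 + s) * gu l p - s * gv l p \<ge> 0" if l: "l < m" and p: "p \<in> P" for l p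
    proof (cases "gu l p > 0")
      case True
      have "s \<le> gu l p / (\<bar>gv l p\<bar> + 1)"
        unfolding s_def using Sfin l p True by (intro Min_le) (force simp: S_def)+
      then have "s * (\<bar>gv l p\<bar> + 1) \<le> gu l p" by (simp add: pos_le_divide_eq)
      then have "s * gv l p \<le> gu l p"
        using s_pos by (smt (verit) mult_left_mono abs_ge_self)
      moreover have "gu l p \<le> (1 + s) * gu l p" using True s_pos by simp
      ultimately show ?thesis by linarith
    next
      case False
      have "gu l p \<ge> 0" using Mge[OF p] by (simp add: gu_def)
      with False have "gu l p = 0" by simp
      then have "p \<in> A u l" using p by (simp add: A_def gu_def)
      then have "p \<in> A v l" using AA[OF l] by simp
      then have "gv l p = 0" by (simp add: A_def gv_def)
      with \<open>gu l p = 0\<close> show ?thesis by simp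
    qed
    define z where "z = (\<lambda>p. (1 + s) * u p - s * v p)"
    have zH: "z \<in> HN n"
    proof -
      have "(\<Sum>p\<in>P. z p) = (1 + s) * (\<Sum>p\<in>P. u p) - s * (\<Sum>p\<in>P. v p)"
        by (simp add: z_def sum_subtractf sum_distrib_left)
      then show ?thesis using uH vH by (auto simp: HN_def z_def P_def)
    qed
    have Mz: "M z l \<le> (1 + s) * M u l - s * M v l" if l: "l < m" for l
    proof -
    have "(MAX p\<in>P. z p - t l p) \<le> (1 + s) * M u l - s * M v l"
    proof (rule max_le[OF fin ne])
      fix p assume p: "p \<in> P"
      have "z p - t l p = (1 + s) * M u l - s * M v l - ((1 + s) * gu l p - s * gv l p)"
        by (simp add: z_def gu_def gv_def algebra_simps)
      then show "z p - t l p \<le> (1 + s) * M u l - s * M v l" using key[OF l p] by linarith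
    qed
    then show ?thesis by (simp add: M_def)
    qed
    define N where "N = real (n choose 2)"
    have N: "N \<ge> 0" by (simp add: N_def)
    have dz: "d_trop n z (t l) \<le> (1 + s) * d_trop n u (t l) - s * d_trop n v (t l)" if l: "l < m" for l
    proof -
      have "d_trop n z (t l) = N * M z l" by (simp add: d_trop_def N_def M_def P_def)
      also have "\<dots> \<le> N * ((1 + s) * M u l - s * M v l)" using Mz[OF l] N by (rule mult_left_mono)
      also have "\<dots> = (1 + s) * d_trop n u (t l) - s * d_trop n v (t l)"
        by (simp add: d_trop_def N_def M_def P_def algebra_simps)
      finally show ?thesis .
    qed
    have "(\<Sum>l<m. w l * d_trop n z (t l)) \<le> (\<Sum>l<m. w l * ((1 + s) * d_trop n u (t l) - s * d_trop n v (t l)))"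
      using dz w by (intro sum_mono mult_left_mono) (auto intro: less_imp_le)
    also have "\<dots> = (1 + s) * (\<Sum>l<m. w l * d_trop n u (t l)) - s * (\<Sum>l<m. w l * d_trop n v (t l))"
      by (simp add: algebra_simps sum_subtractf sum_distrib_left)
    also have "\<dots> = (\<Sum>l<m. w l * d_trop n u (t l))"
      using FW_eqF[of u n m t w v] uF vF by (simp add: FW_def algebra_simps)
    finally have Fz: "(\<Sum>l<m. w l * d_trop n z (t l)) \<le> (\<Sum>l<m. w l * d_trop n u (t l))" .
    have zF: "z \<in> FW"
      using uF zH Fz unfolding FW_def FW_set_def by (auto intro: order_trans)
    define a where "a = s / (1 + s)"
    have a: "0 < a" "a < 1" using s_pos by (auto simp: a_def)
    have ucomb: "u = (\<lambda>p. (1 - a) * z p + a * v p)"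
    proof
      fix p
      have s1: "1 + s > 0" using s_pos by simp
      have "1 - a = 1 / (1 + s)" using s1 by (simp add: a_def field_simps)
      then have "(1 - a) * z p + a * v p = ((1 + s) * u p - s * v p) / (1 + s) + (s * v p) / (1 + s)"
        by (simp add: z_def a_def)
      also have "\<dots> = ((1 + s) * u p) / (1 + s)" by (simp add: diff_divide_distrib)
      also have "\<dots> = u p" using s1 by simp
      finally show "u p = (1 - a) * z p + a * v p" by simp
    qed
    have zv: "z \<noteq> v"
    proof
      assume "z = v"
      then have "\<And>p. (1 + s) * u p = (1 + s) * v p" unfolding z_def
        by (metis (no_types, lifting) add_diff_cancel diff_add_cancel distrib_right mult_1 fun_cong)
      then have "u = v" using s_pos by (intro ext) simp
      with uv show False by simp
    qed
    show False using uV zF vF zv a ucomb unfolding V_def vertices_def by blast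
  qed
  have "tau ` V \<subseteq> PiE {..<m} (\<lambda>_. Pow P)"
    by (auto simp: tau_def A_def)
  moreover have "finite (PiE {..<m} (\<lambda>_. Pow P))" using fin by (intro finite_PiE) auto
  ultimately have "finite V" using inj by (meson finite_imageD finite_subset)
  then show ?thesis by (simp add: V_def FW_def)
qed



lemma cont_MAX:
  fixes f :: "'a::topological_space \<Rightarrow> 'b \<Rightarrow> real"
  assumes "finite A" "A \<noteq> {}" "\<And>p. p \<in> A \<Longrightarrow> continuous_on S (\<lambda>x. f x p)"
  shows "continuous_on S (\<lambda>x. MAX p\<in>A. f x p)"
  using assms
proof (induction A rule: finite_ne_induct)
  case (singleton a)
  then show ?case by simp
next
  case (insert a A)
  have "(\<lambda>x. MAX p\<in>insert a A. f x p) = (\<lambda>x. max (f x a) (MAX p\<in>A. f x p))"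
    using insert.hyps by simp
  then show ?case using insert by (auto intro!: continuous_on_max)
qed

lemma cont_F: "continuous_on UNIV (\<lambda>x::nat set \<Rightarrow> real. \<Sum>l<m. w l * d_trop n x (t l))"
  unfolding d_trop_def
proof (intro continuous_intros)
  fix l
  show "continuous_on UNIV (\<lambda>x::nat set \<Rightarrow> real. MAX p\<in>pairs n. x p - t l p)"
  proof (cases "pairs n = {}")
    case True then show ?thesis by simp
  next
    case False then show ?thesis
      by (intro cont_MAX pairs_finite continuous_intros continuous_on_product_coordinates) auto
  qed
qed

lemma closed_HN: "closed (HN n)"
proof -
  have "HN n = (\<Inter>p\<in>- pairs n. {x. x p = 0}) \<inter> {x. (\<Sum>p\<in>pairs n. x p) = 0}"
    by (auto simp: HN_def)
  moreover have "closed (\<Inter>p\<in>- pairs n. {x::nat set \<Rightarrow> real. x p = 0})"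
    by (intro closed_INT ballI closed_Collect_eq continuous_on_product_coordinates continuous_on_const)
  moreover have "closed {x::nat set \<Rightarrow> real. (\<Sum>p\<in>pairs n. x p) = 0}"
    by (intro closed_Collect_eq continuous_on_sum continuous_on_product_coordinates continuous_on_const)
  ultimately show ?thesis by (metis closed_Int)
qed

lemma compact_box:
  fixes Kf :: "nat set \<Rightarrow> real set"
  assumes "\<And>p. compact (Kf p)"
  shows "compact {x. \<forall>p. x p \<in> Kf p}"
proof -
  have "compactin (product_topology (\<lambda>i. euclidean) UNIV) (PiE UNIV Kf)"
    using assms by (simp add: compactin_PiE)
  moreover have "PiE UNIV Kf = {x. \<forall>p. x p \<in> Kf p}" by (auto simp: PiE_def Pi_def)
  ultimately show ?thesis by (simp add: euclidean_product_topology)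
qed

lemma vertices_nonempty:
  assumes n: "n \<ge> 3" and m: "m \<ge> 1" and w: "\<And>l. l < m \<Longrightarrow> w l > 0"
  shows "vertices (FW_set n m t w) \<noteq> {}"
proof -
  define P where "P = pairs n"
  have fin: "finite P" and ne: "P \<noteq> {}" using pairs_finite pairs_ne[OF n] by (auto simp: P_def)
  define F where "F = (\<lambda>x::nat set \<Rightarrow> real. \<Sum>l<m. w l * d_trop n x (t l))"
  define FW where "FW = FW_set n m t w"
  have FW_eq: "FW = {x \<in> HN n. \<forall>y\<in>HN n. F x \<le> F y}" by (simp add: FW_def FW_set_def F_def)
  define N where "N = real (n choose 2)"
  have N: "N > 0" using n by (simp add: N_def)
  define W where "W = (\<Sum>l<m. w l)"
  have W: "W > 0" unfolding W_def using m w by (intro sum_pos) (auto simp: lessThan_empty_iff)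
  define T where "T = (\<Sum>l<m. \<Sum>p\<in>P. \<bar>t l p\<bar>)"
  have Tb: "\<bar>t l p\<bar> \<le> T" if "l < m" "p \<in> P" for l p
  proof -
    have "\<bar>t l p\<bar> \<le> (\<Sum>p\<in>P. \<bar>t l p\<bar>)" using fin that by (intro member_le_sum) auto
    also have "\<dots> \<le> T" unfolding T_def using that
      by (intro member_le_sum[where f="\<lambda>l. \<Sum>p\<in>P. \<bar>t l p\<bar>"]) (auto intro: sum_nonneg)
    finally show ?thesis .
  qed
  have T0: "T \<ge> 0" unfolding T_def by (intro sum_nonneg) auto
  define Kc where "Kc = real (card P)"
  have Kc: "Kc \<ge> 1" using fin ne by (simp add: Kc_def Suc_le_eq card_gt_0_iff)
  have F0: "F (\<lambda>_. 0) \<le> N * W * T"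
  proof -
    have "d_trop n (\<lambda>_. 0) (t l) \<le> N * T" if l: "l < m" for l
    proof -
      have "(MAX p\<in>P. 0 - t l p) \<le> T" using Tb[OF l] by (intro max_le[OF fin ne]) force
      then show ?thesis using N by (simp add: d_trop_def N_def P_def)
    qed
    then have "F (\<lambda>_. 0) \<le> (\<Sum>l<m. w l * (N * T))"
      unfolding F_def using w by (intro sum_mono mult_left_mono) (auto intro: less_imp_le)
    also have "\<dots> = W * (N * T)" by (simp add: W_def sum_distrib_right)
    also have "\<dots> = N * W * T" by simp
    finally show ?thesis .
  qed
  have Fy: "F y \<ge> N * W * (y q - T)" if q: "q \<in> P" for y q
  proof -
    have "w l * (N * (y q - T)) \<le> w l * d_trop n y (t l)" if l: "l < m" for l
    proof -
      have "y q - T \<le> y q - t l q" using Tb[OF l q] by simp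
      also have "\<dots> \<le> (MAX p\<in>P. y p - t l p)" using fin q by (rule ge_max)
      finally have "N * (y q - T) \<le> d_trop n y (t l)" using N by (simp add: d_trop_def N_def P_def)
      then show ?thesis using w[OF l] by simp
    qed
    then have "(\<Sum>l<m. w l * (N * (y q - T))) \<le> F y" unfolding F_def by (intro sum_mono) auto
    moreover have "(\<Sum>l<m. w l * (N * (y q - T))) = W * (N * (y q - T))" by (simp only: W_def sum_distrib_right)
    ultimately show ?thesis by (simp add: mult_ac)
  qed
  have small: "y q \<le> 2 * T" if "F y \<le> F (\<lambda>_. 0)" "q \<in> P" for y q
  proof -
    have "N * W * (y q - T) \<le> N * W * T" using Fy[OF that(2), of y] F0 that(1) by linarith
    then have "y q - T \<le> T" using N W by (simp add: mult_le_cancel_left_pos)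
    then show ?thesis by simp
  qed
  define B where "B = 2 * T * Kc"
  define Kf where "Kf = (\<lambda>p. if p \<in> P then {-B..B} else {0::real})"
  define Box where "Box = {x. \<forall>p. x p \<in> Kf p}"
  have Boxc: "compact Box" unfolding Box_def by (rule compact_box) (simp add: Kf_def)
  have inBox: "y \<in> Box" if yH: "y \<in> HN n" and yb: "\<forall>q\<in>P. y q \<le> 2 * T" for y
  proof -
    have "y p \<in> Kf p" for p
    proof (cases "p \<in> P")
      case False then show ?thesis using yH by (simp add: Kf_def HN_def P_def)
    next
      case True
      have "2 * T \<le> B" unfolding B_def using T0 Kc by (simp add: mult_le_cancel_left1 mult_left_le)
      then have up: "y p \<le> B" using yb True by force
      have "(\<Sum>q\<in>P. y q) = y p + (\<Sum>q\<in>P - {p}. y q)" using fin True by (rule sum.remove)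
      moreover have "(\<Sum>q\<in>P. y q) = 0" using yH by (simp add: HN_def P_def)
      moreover have "(\<Sum>q\<in>P - {p}. y q) \<le> real (card (P - {p})) * (2 * T)"
        using yb by (intro sum_bounded_above) auto
      moreover have "real (card (P - {p})) * (2 * T) \<le> B"
      proof -
        have "real (card (P - {p})) \<le> Kc" unfolding Kc_def using fin by (simp add: card_mono)
        then have "real (card (P - {p})) * (2 * T) \<le> Kc * (2 * T)" using T0 by (intro mult_right_mono) auto
        then show ?thesis unfolding B_def by (simp add: mult_ac)
      qed
      ultimately have "- B \<le> y p" by linarith
      with up True show ?thesis by (simp add: Kf_def)
    qed
    then show ?thesis by (simp add: Box_def)
  qed
  have contF: "continuous_on UNIV F" unfolding F_def by (rule cont_F)
  have zH: "(\<lambda>_. 0) \<in> HN n" by (simp add: HN_def)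
  have zB: "(\<lambda>_. 0) \<in> Box" using T0 Kc by (simp add: Box_def Kf_def B_def)
  have S0c: "compact (Box \<inter> HN n)" using Boxc closed_HN by (rule compact_Int_closed)
  obtain x0 where x0: "x0 \<in> Box \<inter> HN n" and x0min: "\<forall>y\<in>Box \<inter> HN n. F x0 \<le> F y"
    using continuous_attains_inf[OF S0c _ continuous_on_subset[OF contF]] zH zB by blast
  have x0FW: "x0 \<in> FW"
    unfolding FW_eq
  proof (intro CollectI conjI ballI)
    show "x0 \<in> HN n" using x0 by simp
    fix y assume yH: "y \<in> HN n"
    show "F x0 \<le> F y"
    proof (cases "F y \<le> F (\<lambda>_. 0)")
      case True
      then have "y \<in> Box" using inBox[OF yH] small by blast
      then show ?thesis using x0min yH by blast
    next
      case False
      have "F x0 \<le> F (\<lambda>_. 0)" using x0min zH zB by blast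
      then show ?thesis using False by linarith
    qed
  qed
  have FWBox: "FW \<subseteq> Box"
  proof
    fix x assume "x \<in> FW"
    then have "x \<in> HN n" "F x \<le> F (\<lambda>_. 0)" using zH unfolding FW_eq by auto
    then show "x \<in> Box" using inBox small by blast
  qed
  have FWclosed: "closed FW"
  proof -
    have "FW = HN n \<inter> (\<Inter>y\<in>HN n. {x. F x \<le> F y})" unfolding FW_eq by auto
    moreover have "closed (\<Inter>y\<in>HN n. {x. F x \<le> F y})"
      by (intro closed_INT ballI closed_Collect_le contF continuous_on_const)
    ultimately show ?thesis using closed_HN by (metis closed_Int)
  qed
  have FWc: "compact FW"
  proof -
    have "compact (Box \<inter> FW)" using Boxc FWclosed by (rule compact_Int_closed)
    moreover have "Box \<inter> FW = FW" using FWBox by blast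
    ultimately show ?thesis by simp
  qed
  define Sq where "Sq = (\<lambda>x::nat set \<Rightarrow> real. \<Sum>p\<in>P. (x p)^2)"
  have contSq: "continuous_on FW Sq" unfolding Sq_def
    by (intro continuous_intros continuous_on_subset[OF continuous_on_product_coordinates]) auto
  obtain v where vF: "v \<in> FW" and vmax: "\<forall>y\<in>FW. Sq y \<le> Sq v"
    using continuous_attains_sup[OF FWc _ contSq] x0FW by blast
  have "v \<in> vertices FW"
    unfolding vertices_def
  proof (intro CollectI conjI notI)
    show "v \<in> FW" by (rule vF)
    assume "\<exists>a\<in>FW. \<exists>b\<in>FW. \<exists>u::real. a \<noteq> b \<and> 0 < u \<and> u < 1 \<and> v = (\<lambda>p. (1 - u) * a p + u * b p)"
    then obtain a b u where aF: "a \<in> FW" and bF: "b \<in> FW" and ab: "a \<noteq> b" and u: "0 < u" "u < 1"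
      and vab: "v = (\<lambda>p. (1 - u) * a p + u * b p)" by blast
    have aH: "a \<in> HN n" and bH: "b \<in> HN n" using aF bF unfolding FW_eq by auto
    obtain p0 where p0: "a p0 \<noteq> b p0" using ab by (meson ext)
    have p0P: "p0 \<in> P"
    proof (rule ccontr)
      assume "p0 \<notin> P"
      then have "a p0 = 0" "b p0 = 0" using aH bH by (auto simp: HN_def P_def)
      with p0 show False by simp
    qed
    have ident: "(v p)^2 = (1 - u) * (a p)^2 + u * (b p)^2 - u * (1 - u) * (a p - b p)^2" for p
      by (simp add: vab power2_eq_square algebra_simps)
    have "Sq v = (1 - u) * Sq a + u * Sq b - u * (1 - u) * (\<Sum>p\<in>P. (a p - b p)^2)"
      unfolding Sq_def ident by (simp add: sum_subtractf sum.distrib sum_distrib_left)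
    moreover have "(\<Sum>p\<in>P. (a p - b p)^2) > 0"
    proof -
      have "(\<Sum>p\<in>P. (a p - b p)^2) \<ge> (a p0 - b p0)^2"
        using fin p0P by (intro member_le_sum) auto
      moreover have "(a p0 - b p0)^2 > 0" using p0 by simp
      ultimately show ?thesis by linarith
    qed
    moreover have "u * (1 - u) > 0" using u by simp
    moreover have "Sq a \<le> Sq v" "Sq b \<le> Sq v" using vmax aF bF by auto
    ultimately have "Sq v < (1 - u) * Sq v + u * Sq v"
    proof -
      assume h: "Sq v = (1 - u) * Sq a + u * Sq b - u * (1 - u) * (\<Sum>p\<in>P. (a p - b p)^2)"
        "(\<Sum>p\<in>P. (a p - b p)^2) > 0" "u * (1 - u) > 0" "Sq a \<le> Sq v" "Sq b \<le> Sq v"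
      have "(1 - u) * Sq a \<le> (1 - u) * Sq v" using h(4) u by (intro mult_left_mono) auto
      moreover have "u * Sq b \<le> u * Sq v" using h(5) u by (intro mult_left_mono) auto
      moreover have "u * (1 - u) * (\<Sum>p\<in>P. (a p - b p)^2) > 0" using h(2,3) by simp
      ultimately show ?thesis using h(1) by linarith
    qed
    then show False by (simp add: algebra_simps)
  qed
  then show ?thesis by (auto simp: FW_def)
qed


theorem corollary4p4:
  fixes n m :: nat and t :: "nat \<Rightarrow> nat set \<Rightarrow> real" and w :: "nat \<Rightarrow> real"
  assumes "n \<ge> 3" and "m \<ge> 1"
    and "\<And>l. l < m \<Longrightarrow> t l \<in> tree_space n"
    and "\<And>l. l < m \<Longrightarrow> w l > 0"
  shows "\<forall>i<n. \<forall>j<n. \<forall>k<n. i \<noteq> j \<and> i \<noteq> k \<and> j \<noteq> k \<longrightarrow>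
           ((\<forall>l<m. has_triple (t l) i j k) \<longrightarrow> has_triple (consensus n m t w) i j k) \<and>
           (has_triple (consensus n m t w) i j k \<longrightarrow> (\<exists>l<m. has_triple (t l) i j k))"
  by (rule main_from_vertices[OF assms finite_vertices[OF assms(1,4)] vertices_nonempty[OF assms(1,2,4)]])

end
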